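(* Let $B$ be the complex unital $*$-algebra generated by hermitian $p,q$ with relation $pq-qp=-\mathrm{i}\cdot 1$, let $d:=\mathrm{i}p$, $A:=\mathbb{C}[q]\subseteq B$, and $X:=\operatorname{span}\{a\,d^2\,b: a,b\in A\}\subseteq B$, a $*$-bimodule for $A$ under multiplication and involution of $B$. Let $\mu$ be a Radon measure on $\mathbb{R}$, not supported on a finite set, for which all polynomials are integrable, and let $f(a)=\int a\,d\mu$ on $A$ (polynomials in $q$ identified with polynomials in the real variable). Then: (i) the map $F_0\big(\sum_j a_j d^2 b_j\big):=\int\sum_j a_j b_j\,d\mu$ is a well-defined hermitian linear functional on $X$; (ii) for $x=\sum_j a_jd^2b_j$ and $h:=\sum_j a_jb_j$, one has $|F_0(a^+\cdot x)|^2\le f(h^+h)\,f(a^+a)$ for all $a\in A$; (iii) the GNS representation of $f$ acts on $\mathcal{D}_f=\mathbb{C}[x]\subseteq L^2(\mathbb{R};\mu)$ by multiplication, $\rho_f(a)b=ab$, with $\varphi_f=1$, and setting $\theta_{F_0}\big(\sum_j a_jd^2b_j\big)b:=\sum_j a_jb_jb$ for $b\in\mathcal{D}_f$ gives a well-defined map such that $(\theta_{F_0},\rho_f)$ is a strong $*$-representation of $X$ on $\mathcal{D}_f$ with $F_0(a\cdot x\cdot b)=\langle\theta_{F_0}(x)\rho_f(b)\varphi_f,\rho_f(a^+)\varphi_f\rangle$ for all $a,b\in A$, $x\in X$; in particular $\theta_{F_0}(d^2)=I$.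
   Context: A $*$-bimodule $X$ for $A$: a complex $A$-bimodule (unital left and right $A$-module with commuting actions) with conjugate-linear involution satisfying $(a\cdot x\cdot b)^+=b^+\cdot x^+\cdot a^+$. On $A=\mathbb{C}[q]$, $a^+$ is the polynomial with complex-conjugated coefficients. Hermitian: $F(x^+)=\overline{F(x)}$. GNS representation of a positive functional $f$: $\mathcal{D}_f=A/\{a:f(a^+a)=0\}$ with inner product $f(b^+a)$, $\rho_f(a)(b+\mathcal{N}_f)=ab+\mathcal{N}_f$, $\varphi_f=1+\mathcal{N}_f$. A $*$-representation of $X$ on an inner product space $\mathcal{D}$ with completion $\mathcal{H}$ is a pair $(\theta,\rho)$ with $\rho$ a $*$-representation of $A$ ($\langle\rho(a)\varphi,\psi\rangle=\langle\varphi,\rho(a^+)\psi\rangle$) with $\rho(1)=I$, and $\theta$ a linear map from $X$ into operators $t:\mathcal{D}\to\mathcal{H}$ with $\mathcal{D}(t^* )\supseteq\mathcal{D}$, such that $\theta(x^+)=\theta(x)^*|_{\mathcal{D}}$ and $\langle\theta(a\cdot x\cdot b)\varphi,\psi\rangle=\langle\theta(x)\rho(b)\varphi,\rho(a^+)\psi\rangle$. It is strong if every $\theta(x)$ maps $\mathcal{D}$ into $\mathcal{D}$ and $\theta(x)^*$ also maps $\mathcal{D}$ into $\mathcal{D}$. *)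

theory Defs
  imports "HOL-Analysis.Analysis" "HOL-Computational_Algebra.Polynomial"
begin

text \<open>Elements of B are realised as operators on complex polynomials:
  q acts by multiplication with x, p acts as -i d/dx; then pq - qp = -i.
  This representation of the Weyl algebra is faithful, so equality in B
  is equality of these operators.\<close>

definition qB :: "complex poly \<Rightarrow> complex poly" where
  "qB g = [:0, 1:] * g"

definition pB :: "complex poly \<Rightarrow> complex poly" where
  "pB g = smult (- \<i>) (pderiv g)"

definition dB :: "complex poly \<Rightarrow> complex poly" where
  "dB g = smult \<i> (pB g)"

definition mulA :: "complex poly \<Rightarrow> complex poly \<Rightarrow> complex poly" where
  "mulA a g = a * g"

lemma canonical_relation: "pB (qB g) - qB (pB g) = smult (- \<i>) g"
  by (simp add: pB_def qB_def pderiv_mult pderiv_pCons algebra_simps smult_add_right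
      flip: smult_diff_right)

text \<open>An element of X is presented by a finite list of pairs (a_j, b_j), standing for
  sum_j a_j d^2 b_j (complex scalars are absorbed into a_j; the empty list is 0).\<close>

type_synonym xrep = "(complex poly \<times> complex poly) list"

definition Xelem :: "xrep \<Rightarrow> complex poly \<Rightarrow> complex poly" where
  "Xelem xs g = (\<Sum>(a, b)\<leftarrow>xs. mulA a (dB (dB (mulA b g))))"

definition pconj :: "complex poly \<Rightarrow> complex poly" where
  "pconj a = map_poly cnj a"

text \<open>involution of B restricted to X: (a d^2 b)^+ = b^+ (d^+)^2 a^+ = b^+ d^2 a^+\<close>
definition xstar :: "xrep \<Rightarrow> xrep" where
  "xstar xs = map (\<lambda>(a, b). (pconj b, pconj a)) xs"

definition bimod :: "complex poly \<Rightarrow> xrep \<Rightarrow> complex poly \<Rightarrow> xrep" where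
  "bimod c xs e = map (\<lambda>(a, b). (c * a, b * e)) xs"

definition xscale :: "complex \<Rightarrow> xrep \<Rightarrow> xrep" where
  "xscale s xs = map (\<lambda>(a, b). (smult s a, b)) xs"

definition d2 :: xrep where
  "d2 = [(1, 1)]"

definition hsum :: "xrep \<Rightarrow> complex poly" where
  "hsum xs = (\<Sum>(a, b)\<leftarrow>xs. a * b)"

definition fmu :: "real measure \<Rightarrow> complex poly \<Rightarrow> complex" where
  "fmu M a = (\<integral>x. poly a (complex_of_real x) \<partial>M)"

definition F0 :: "real measure \<Rightarrow> xrep \<Rightarrow> complex" where
  "F0 M xs = fmu M (hsum xs)"

definition gns_ip :: "real measure \<Rightarrow> complex poly \<Rightarrow> complex poly \<Rightarrow> complex" where
  "gns_ip M a b = fmu M (pconj b * a)"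

definition gns_null :: "real measure \<Rightarrow> complex poly set" where
  "gns_null M = {a. fmu M (pconj a * a) = 0}"

definition rho :: "complex poly \<Rightarrow> complex poly \<Rightarrow> complex poly" where
  "rho a b = a * b"

definition phi :: "complex poly" where
  "phi = 1"

definition thetaF0 :: "xrep \<Rightarrow> complex poly \<Rightarrow> complex poly" where
  "thetaF0 xs b = hsum xs * b"

end

theory Submission
  imports Defs
begin


abbreviation ev :: "complex poly \<Rightarrow> real \<Rightarrow> complex" where
  "ev p x \<equiv> poly p (complex_of_real x)"

lemma poly_pconj: "poly (pconj p) (complex_of_real x) = cnj (poly p (complex_of_real x))"
  unfolding pconj_def
  by (induction p) (simp_all add: map_poly_pCons)

lemma int_poly:
  fixes M :: "real measure"
  assumes moments: "\<forall>n::nat. integrable M (\<lambda>x. x ^ n)"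
  shows "integrable M (\<lambda>x. poly p (complex_of_real x))"
proof -
  have h: "integrable M (\<lambda>x. complex_of_real x ^ i)" for i
    using moments complex_of_real_integrable_eq[of M "\<lambda>x. x^i"] by (simp add: of_real_power)
  have "integrable M (\<lambda>x. \<Sum>i\<le>degree p. coeff p i * complex_of_real x ^ i)"
    using h by auto
  then show ?thesis by (simp add: poly_altdef)
qed

lemma dB_eq: "dB g = pderiv g"
  by (simp add: dB_def pB_def)

lemma Xelem_Cons: "Xelem ((a,b)#xs) g = a * pderiv (pderiv (b * g)) + Xelem xs g"
  by (simp add: Xelem_def dB_eq mulA_def)

lemma Xelem_Nil: "Xelem [] g = 0"
  by (simp add: Xelem_def)

lemma hsum_Cons: "hsum ((a,b)#xs) = a * b + hsum xs"
  by (simp add: hsum_def)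

lemma hsum_Nil: "hsum [] = 0"
  by (simp add: hsum_def)

lemma elem_id:
  fixes a b :: "complex poly"
  defines "x \<equiv> [:0,1:] :: complex poly"
  shows "a * pderiv (pderiv (b * (x*x))) - 2 * (x * (a * pderiv (pderiv (b * x))))
      + x * x * (a * pderiv (pderiv (b * 1))) = 2 * (a * b)"
proof -
  have px: "pderiv x = 1" unfolding x_def by (simp add: pderiv_pCons)
  show ?thesis by (simp add: pderiv_mult px pderiv_add algebra_simps)
qed

lemma hsum_recover:
  defines "x \<equiv> [:0,1:] :: complex poly"
  shows "Xelem xs (x*x) - 2 * (x * Xelem xs x) + x * x * Xelem xs 1 = 2 * hsum xs"
proof (induction xs)
  case Nil
  then show ?case by (simp add: Xelem_Nil hsum_Nil)
next
  case (Cons p xs)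
  obtain a b where p: "p = (a,b)" by fastforce
  have e: "a * pderiv (pderiv (b * (x*x))) - 2 * (x * (a * pderiv (pderiv (b * x))))
      + x * x * (a * pderiv (pderiv (b * 1))) = 2 * (a * b)"
    unfolding x_def by (rule elem_id)
  show ?case using Cons e unfolding p Xelem_Cons hsum_Cons
    by (simp add: algebra_simps)
qed

lemma hsum_welldef: "Xelem xs = Xelem ys \<Longrightarrow> hsum xs = hsum ys"
proof -
  assume "Xelem xs = Xelem ys"
  then have "2 * hsum xs = 2 * hsum ys" using hsum_recover[of xs] hsum_recover[of ys] by simp
  then show ?thesis by simp
qed

lemma hsum_append: "hsum (xs @ ys) = hsum xs + hsum ys"
  by (simp add: hsum_def)

lemma hsum_xscale: "hsum (xscale s xs) = smult s (hsum xs)"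
  by (induction xs) (auto simp: xscale_def hsum_Cons hsum_Nil smult_add_right)

lemma hsum_bimod: "hsum (bimod c xs e) = c * hsum xs * e"
  by (induction xs) (auto simp: bimod_def hsum_Cons hsum_Nil algebra_simps)

lemma hsum_xstar: "poly (hsum (xstar xs)) (complex_of_real x) = cnj (poly (hsum xs) (complex_of_real x))"
  by (induction xs) (auto simp: xstar_def hsum_Cons hsum_Nil poly_pconj)

lemma real_CS:
  fixes f g :: "'a \<Rightarrow> real"
  assumes "integrable M (\<lambda>x. f x ^ 2)" "integrable M (\<lambda>x. g x ^ 2)" "integrable M (\<lambda>x. f x * g x)"
  shows "(\<integral>x. f x * g x \<partial>M)^2 \<le> (\<integral>x. f x ^ 2 \<partial>M) * (\<integral>x. g x ^ 2 \<partial>M)"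
proof -
  define A where "A = (\<integral>x. f x ^ 2 \<partial>M)"
  define B where "B = (\<integral>x. g x ^ 2 \<partial>M)"
  define C where "C = (\<integral>x. f x * g x \<partial>M)"
  have q: "0 \<le> A - 2 * t * C + t^2 * B" for t
  proof -
    have "0 \<le> (\<integral>x. (f x - t * g x)^2 \<partial>M)" by simp
    also have "(\<integral>x. (f x - t * g x)^2 \<partial>M) = (\<integral>x. f x ^ 2 - (2*t) * (f x * g x) + t^2 * g x ^ 2 \<partial>M)"
      by (rule Bochner_Integration.integral_cong) (auto simp: power2_eq_square algebra_simps)
    also have "\<dots> = A - 2 * t * C + t^2 * B"
      using assms unfolding A_def B_def C_def by simp
    finally show ?thesis .
  qed
  have B0: "0 \<le> B" unfolding B_def by simp
  show ?thesis
  proof (cases "B = 0")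
    case True
    show ?thesis
    proof (cases "C = 0")
      case False
      have "0 \<le> A - 2 * ((A+1)/(2*C)) * C" using q[of "(A+1)/(2*C)"] True by simp
      then show ?thesis using False by (simp add: field_simps)
    qed (simp add: C_def A_def B_def True[unfolded B_def])
  next
    case False
    then have Bp: "B > 0" using B0 by simp
    have "0 \<le> A - 2 * (C/B) * C + (C/B)^2 * B" by (rule q)
    then have "0 \<le> A * B - C^2" using Bp by (simp add: field_simps power2_eq_square)
    then show ?thesis unfolding A_def[symmetric] B_def[symmetric] C_def[symmetric] by simp
  qed
qed

lemma fmu_cong: "(\<And>x. poly p (complex_of_real x) = poly q (complex_of_real x)) \<Longrightarrow> fmu M p = fmu M q"
  unfolding fmu_def by simp

lemma fmu_add:
  assumes moments: "\<forall>n::nat. integrable M (\<lambda>x. x ^ n)"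
  shows "fmu M (p + q) = fmu M p + fmu M q"
  unfolding fmu_def using int_poly[OF moments, of p] int_poly[OF moments, of q] by simp

lemma fmu_smult: "fmu M (smult s p) = s * fmu M p"
  unfolding fmu_def by simp

lemma fmu_pconj: "fmu M (pconj p) = cnj (fmu M p)"
  unfolding fmu_def poly_pconj by simp

lemma ev_sq: "poly (pconj a * a) (complex_of_real x) = complex_of_real ((cmod (poly a (complex_of_real x)))^2)"
  by (subst complex_norm_square) (simp add: poly_pconj mult.commute)

lemma fmu_sq: "fmu M (pconj a * a) = complex_of_real (\<integral>x. (cmod (poly a (complex_of_real x)))^2 \<partial>M)"
  unfolding fmu_def ev_sq by (rule integral_complex_of_real)

lemma int_sq:
  assumes moments: "\<forall>n::nat. integrable M (\<lambda>x. x ^ n)"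
  shows "integrable M (\<lambda>x. (cmod (poly a (complex_of_real x)))^2)"
  using int_poly[OF moments, of "pconj a * a"] unfolding ev_sq complex_of_real_integrable_eq .

lemma null_zero:
  fixes M :: "real measure"
  assumes borel: "sets M = sets borel"
    and moments: "\<forall>n::nat. integrable M (\<lambda>x. x ^ n)"
    and not_finite_supp: "\<not> (\<exists>S. finite S \<and> emeasure M (UNIV - S) = 0)"
    and z: "fmu M (pconj a * a) = 0"
  shows "a = 0"
proof (rule ccontr)
  assume a0: "a \<noteq> 0"
  have "(\<integral>x. (cmod (poly a (complex_of_real x)))^2 \<partial>M) = 0" using z fmu_sq[of M a] by simp
  then have "AE x in M. (cmod (poly a (complex_of_real x)))^2 = 0"
    using integral_nonneg_eq_0_iff_AE[OF int_sq[OF moments]] by simp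
  then have "AE x in M. poly a (complex_of_real x) = 0" by simp
  then obtain N where N: "{x \<in> space M. \<not> poly a (complex_of_real x) = 0} \<subseteq> N" "emeasure M N = 0" "N \<in> sets M"
    by (auto elim!: AE_E)
  have sp: "space M = UNIV" using sets_eq_imp_space_eq[OF borel] by simp
  define S where "S = complex_of_real -` {z. poly a z = 0}"
  have fin: "finite S" unfolding S_def
    by (rule finite_vimageI) (auto simp: poly_roots_finite a0 inj_on_def)
  have "UNIV - S \<subseteq> N" using N(1) sp unfolding S_def by auto
  then have "emeasure M (UNIV - S) \<le> emeasure M N" using N(3) by (rule emeasure_mono)
  then have "emeasure M (UNIV - S) = 0" using N(2) by simp
  then show False using not_finite_supp fin by blast
qed

lemma CS_poly:
  fixes M :: "real measure"
  assumes moments: "\<forall>n::nat. integrable M (\<lambda>x. x ^ n)"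
  shows "(cmod (fmu M (pconj a * h)))^2 \<le> Re (fmu M (pconj h * h) * fmu M (pconj a * a))"
proof -
  define fa where "fa x = cmod (poly a (complex_of_real x))" for x
  define fh where "fh x = cmod (poly h (complex_of_real x))" for x
  have pw: "cmod (poly (pconj a * h) (complex_of_real x)) = fa x * fh x" for x
    by (simp add: fa_def fh_def poly_pconj norm_mult)
  have i1: "integrable M (\<lambda>x. fa x * fh x)"
    using integrable_norm[OF int_poly[OF moments, of "pconj a * h"]] unfolding pw .
  have "cmod (fmu M (pconj a * h)) \<le> (\<integral>x. fa x * fh x \<partial>M)"
    unfolding fmu_def using integral_norm_bound[of M "\<lambda>x. poly (pconj a * h) (complex_of_real x)"]
    unfolding pw .
  then have "(cmod (fmu M (pconj a * h)))^2 \<le> (\<integral>x. fa x * fh x \<partial>M)^2"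
    by (intro power_mono) auto
  also have "\<dots> \<le> (\<integral>x. fa x ^ 2 \<partial>M) * (\<integral>x. fh x ^ 2 \<partial>M)"
    by (rule real_CS) (use int_sq[OF moments] i1 in \<open>auto simp: fa_def fh_def\<close>)
  also have "\<dots> = Re (fmu M (pconj h * h) * fmu M (pconj a * a))"
    unfolding fmu_sq fa_def fh_def by simp
  finally show ?thesis .
qed

lemma real_prod: "fmu M (pconj h * h) * fmu M (pconj a * a) \<in> \<real>"
  unfolding fmu_sq by simp


theorem mainTheorem12:
  fixes M :: "real measure"
  assumes borel: "sets M = sets borel"
    and radon: "\<forall>K. compact K \<longrightarrow> emeasure M K < \<infinity>"
    and moments: "\<forall>n::nat. integrable M (\<lambda>x. x ^ n)"
    and not_finite_supp: "\<not> (\<exists>S. finite S \<and> emeasure M (UNIV - S) = 0)"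
  shows
    \<comment> \<open>(i) F0 well defined, linear, hermitian\<close>
    "(\<forall>xs ys. Xelem xs = Xelem ys \<longrightarrow> F0 M xs = F0 M ys)
     \<and> (\<forall>xs ys. F0 M (xs @ ys) = F0 M xs + F0 M ys)
     \<and> (\<forall>s xs. F0 M (xscale s xs) = s * F0 M xs)
     \<and> (\<forall>xs. F0 M (xstar xs) = cnj (F0 M xs))
    \<comment> \<open>(ii) Cauchy-Schwarz type bound\<close>
     \<and> (\<forall>xs a. fmu M (pconj (hsum xs) * hsum xs) * fmu M (pconj a * a) \<in> \<real>
         \<and> (cmod (F0 M (bimod (pconj a) xs 1)))\<^sup>2
             \<le> Re (fmu M (pconj (hsum xs) * hsum xs) * fmu M (pconj a * a)))
    \<comment> \<open>(iii) GNS representation: N_f = 0, so D_f = C[x] with the L2(mu) inner product\<close>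
     \<and> gns_null M = {0}
     \<and> (\<forall>a b. gns_ip M a b = (\<integral>x. poly a (complex_of_real x) * cnj (poly b (complex_of_real x)) \<partial>M))
     \<and> (\<forall>a. rho 1 a = a)
     \<and> (\<forall>a u v. gns_ip M (rho a u) v = gns_ip M u (rho (pconj a) v))
    \<comment> \<open>theta well defined and linear\<close>
     \<and> (\<forall>xs ys. Xelem xs = Xelem ys \<longrightarrow> thetaF0 xs = thetaF0 ys)
     \<and> (\<forall>xs ys b. thetaF0 (xs @ ys) b = thetaF0 xs b + thetaF0 ys b)
     \<and> (\<forall>s xs b. thetaF0 (xscale s xs) b = smult s (thetaF0 xs b))
     \<and> (\<forall>xs b c. thetaF0 xs (b + c) = thetaF0 xs b + thetaF0 xs c)
     \<and> (\<forall>xs s b. thetaF0 xs (smult s b) = smult s (thetaF0 xs b))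
    \<comment> \<open>*-representation: theta(x^+) = theta(x)^* on D_f, and the bimodule covariance\<close>
     \<and> (\<forall>xs u v. gns_ip M (thetaF0 xs u) v = gns_ip M u (thetaF0 (xstar xs) v))
     \<and> (\<forall>xs a b u v. gns_ip M (thetaF0 (bimod a xs b) u) v
                       = gns_ip M (thetaF0 xs (rho b u)) (rho (pconj a) v))
    \<comment> \<open>representation of F0\<close>
     \<and> (\<forall>xs a b. F0 M (bimod a xs b) = gns_ip M (thetaF0 xs (rho b phi)) (rho (pconj a) phi))
    \<comment> \<open>theta(d^2) = I\<close>
     \<and> thetaF0 d2 = id"
  proof -
  note ip = int_poly[OF moments]
  have gns: "gns_ip M a b = (\<integral>x. poly a (complex_of_real x) * cnj (poly b (complex_of_real x)) \<partial>M)" for a b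
    unfolding gns_ip_def fmu_def by (simp add: poly_pconj mult.commute)
  have P1: "\<forall>xs ys. Xelem xs = Xelem ys \<longrightarrow> F0 M xs = F0 M ys"
    by (auto simp: F0_def dest: hsum_welldef)
  have P2: "\<forall>xs ys. F0 M (xs @ ys) = F0 M xs + F0 M ys"
    by (simp add: F0_def hsum_append fmu_add[OF moments])
  have P3: "\<forall>s xs. F0 M (xscale s xs) = s * F0 M xs"
    by (simp add: F0_def hsum_xscale fmu_smult)
  have P4: "\<forall>xs. F0 M (xstar xs) = cnj (F0 M xs)"
  proof
    fix xs
    have "F0 M (xstar xs) = fmu M (pconj (hsum xs))"
      unfolding F0_def by (rule fmu_cong) (simp add: hsum_xstar poly_pconj)
    then show "F0 M (xstar xs) = cnj (F0 M xs)" by (simp add: fmu_pconj F0_def)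
  qed
  have P5: "\<forall>xs a. fmu M (pconj (hsum xs) * hsum xs) * fmu M (pconj a * a) \<in> \<real>
         \<and> (cmod (F0 M (bimod (pconj a) xs 1)))\<^sup>2
             \<le> Re (fmu M (pconj (hsum xs) * hsum xs) * fmu M (pconj a * a))"
    using CS_poly[OF moments] real_prod by (simp add: F0_def hsum_bimod)
  have P6: "gns_null M = {0}"
    using null_zero[OF borel moments not_finite_supp] by (auto simp: gns_null_def fmu_def)
  have P7: "\<forall>a u v. gns_ip M (rho a u) v = gns_ip M u (rho (pconj a) v)"
    by (simp add: gns rho_def poly_pconj mult_ac)
  have P8: "\<forall>xs ys. Xelem xs = Xelem ys \<longrightarrow> thetaF0 xs = thetaF0 ys"
  proof (intro allI impI)
    fix xs ys assume "Xelem xs = Xelem ys"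
    then have "hsum xs = hsum ys" by (rule hsum_welldef)
    then show "thetaF0 xs = thetaF0 ys" by (simp add: thetaF0_def fun_eq_iff)
  qed
  have P9: "\<forall>xs u v. gns_ip M (thetaF0 xs u) v = gns_ip M u (thetaF0 (xstar xs) v)"
    by (simp add: gns thetaF0_def hsum_xstar mult_ac)
  have P10: "\<forall>xs a b u v. gns_ip M (thetaF0 (bimod a xs b) u) v
                       = gns_ip M (thetaF0 xs (rho b u)) (rho (pconj a) v)"
    by (simp add: gns thetaF0_def hsum_bimod rho_def poly_pconj mult_ac)
  have P11: "\<forall>xs a b. F0 M (bimod a xs b) = gns_ip M (thetaF0 xs (rho b phi)) (rho (pconj a) phi)"
    by (simp add: gns F0_def fmu_def thetaF0_def hsum_bimod rho_def phi_def poly_pconj mult_ac)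
  have P12: "thetaF0 d2 = id"
    by (simp add: thetaF0_def d2_def hsum_Cons hsum_Nil fun_eq_iff)
  have G: "\<forall>a b. gns_ip M a b = (\<integral>x. poly a (complex_of_real x) * cnj (poly b (complex_of_real x)) \<partial>M)"
    using gns by blast
  have R: "\<forall>a. rho 1 a = a" by (simp add: rho_def)
  have T1: "\<forall>xs ys b. thetaF0 (xs @ ys) b = thetaF0 xs b + thetaF0 ys b"
    by (simp add: thetaF0_def hsum_append distrib_right)
  have T2: "\<forall>s xs b. thetaF0 (xscale s xs) b = smult s (thetaF0 xs b)"
    by (simp add: thetaF0_def hsum_xscale)
  have T3: "\<forall>xs b c. thetaF0 xs (b + c) = thetaF0 xs b + thetaF0 xs c"
    by (simp add: thetaF0_def distrib_left)
  have T4: "\<forall>xs s b. thetaF0 xs (smult s b) = smult s (thetaF0 xs b)"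
    by (simp add: thetaF0_def)
  show ?thesis
    by (intro conjI P1 P2 P3 P4 P5 P6 P7 P8 P9 P10 P11 P12 G R T1 T2 T3 T4)
qed

end
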